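(* In the setting (R), fix $x\in\mathbb{R}^n$. Then $v_{\lambda,\mu}+w_{\lambda,\mu}\to x$ as $\lambda,\mu\to0^+$; consequently $u_{\lambda,\mu}-v_{\lambda,\mu}\to0$, so that along any sequence $(\lambda_k,\mu_k)$ with $\lambda_k,\mu_k>0$ converging to $(0,0)$, the cluster points of $(v_{\lambda_k,\mu_k})_k$ and of $(u_{\lambda_k,\mu_k})_k$ coincide. Moreover, every such cluster point belongs to $U(x)$.
   Context: Setting (R): Let $F_1=\|\cdot\|$ and $F_2=|||\cdot|||$ be two norms on $\mathbb{R}^n$, with dual norms $\|\cdot\|_*$ and $|||\cdot|||_*$, so that $F_2^*(y)=I\{|||y|||_*\le1\}$ (indicator: $0$ if $|||y|||_*\le1$, $+\infty$ otherwise). For $x\in\mathbb{R}^n$ define $S(x)=\min_{u\in\mathbb{R}^n}F_1(u)+F_2^*(x-u)$ and $U(x)=\arg\min_{u\in\mathbb{R}^n}F_1(u)+F_2^*(x-u)$. For $\lambda,\mu>0$, problem (P) is $$\min_{v,w\in\mathbb{R}^n}\ F_1(v)+\frac{\lambda}{2}\|v\|_2^2+F_2^*(w)+\frac{1}{2\mu}\|x-v-w\|_2^2,$$ which has a unique minimizer denoted $(v_{\lambda,\mu},w_{\lambda,\mu})$; its minimal value is denoted $S_{\lambda,\mu}(x)$; set $u_{\lambda,\mu}=x-w_{\lambda,\mu}$. *)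

theory Defs
  imports "HOL-Analysis.Analysis"
begin

definition is_norm :: "(real^'n \<Rightarrow> real) \<Rightarrow> bool" where
  "is_norm N \<longleftrightarrow> (\<forall>x. N x = 0 \<longleftrightarrow> x = 0) \<and> (\<forall>a x. N (a *\<^sub>R x) = \<bar>a\<bar> * N x)
     \<and> (\<forall>x y. N (x + y) \<le> N x + N y)"

definition dual_norm :: "(real^'n \<Rightarrow> real) \<Rightarrow> real^'n \<Rightarrow> real" where
  "dual_norm N y = Sup {x \<bullet> y | x. N x \<le> 1}"

text \<open>F2^* is the indicator of the dual unit ball; it is finite (=0) exactly on
  the set below, so minimising F(u) + F2^*(x-u) means minimising F(u) subject to
  dual_norm N2 (x-u) \<le> 1.\<close>
definition dual_ball :: "(real^'n \<Rightarrow> real) \<Rightarrow> (real^'n) set" where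
  "dual_ball N = {y. dual_norm N y \<le> 1}"

text \<open>U(x) = argmin_u F1(u) + F2^*(x-u).\<close>
definition U_set :: "(real^'n \<Rightarrow> real) \<Rightarrow> (real^'n \<Rightarrow> real) \<Rightarrow> real^'n \<Rightarrow> (real^'n) set" where
  "U_set N1 N2 x = {u. x - u \<in> dual_ball N2 \<and>
      (\<forall>u'. x - u' \<in> dual_ball N2 \<longrightarrow> N1 u \<le> N1 u')}"

text \<open>Objective of problem (P) on its effective domain (w in the dual ball).\<close>
definition P_obj :: "(real^'n \<Rightarrow> real) \<Rightarrow> real \<Rightarrow> real \<Rightarrow> real^'n \<Rightarrow> real^'n \<Rightarrow> real^'n \<Rightarrow> real" where
  "P_obj N1 lam mu x v w = N1 v + lam / 2 * (norm v)\<^sup>2 + 1 / (2 * mu) * (norm (x - v - w))\<^sup>2"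

definition is_P_min :: "(real^'n \<Rightarrow> real) \<Rightarrow> (real^'n \<Rightarrow> real) \<Rightarrow> real \<Rightarrow> real \<Rightarrow> real^'n \<Rightarrow> real^'n \<Rightarrow> real^'n \<Rightarrow> bool" where
  "is_P_min N1 N2 lam mu x v w \<longleftrightarrow> w \<in> dual_ball N2 \<and>
     (\<forall>v' w'. w' \<in> dual_ball N2 \<longrightarrow> P_obj N1 lam mu x v w \<le> P_obj N1 lam mu x v' w')"

definition cluster_point :: "(nat \<Rightarrow> 'a::topological_space) \<Rightarrow> 'a \<Rightarrow> bool" where
  "cluster_point s p \<longleftrightarrow> (\<exists>r. strict_mono r \<and> (s \<circ> r) \<longlonglongrightarrow> p)"

end

theory Submission
  imports Defs
begin

lemma isn_0: "is_norm N \<Longrightarrow> N 0 = 0" unfolding is_norm_def by blast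

lemma isn_scale: "is_norm N \<Longrightarrow> N (c *\<^sub>R a) = \<bar>c\<bar> * N a" unfolding is_norm_def by blast

lemma isn_nonneg: assumes "is_norm N" shows "N x \<ge> 0"
proof -
  have "N (x + (-1) *\<^sub>R x) \<le> N x + N ((-1) *\<^sub>R x)" using assms unfolding is_norm_def by blast
  moreover have "N ((-1) *\<^sub>R x) = N x" using isn_scale[OF assms, of "-1" x] by simp
  ultimately show ?thesis using isn_0[OF assms] by simp
qed

lemma isn_minus: assumes "is_norm N" shows "N (a - b) = N (b - a)"
proof -
  have "N ((-1) *\<^sub>R (b - a)) = N (b - a)" using isn_scale[OF assms, of "-1" "b - a"] by simp
  thus ?thesis by simp
qed

lemma isn_tri: "is_norm N \<Longrightarrow> N (a + b) \<le> N a + N b" unfolding is_norm_def by blast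


lemma isn_sum: assumes "is_norm N" shows "N (sum f A) \<le> (\<Sum>i\<in>A. N (f i))"
proof (cases "finite A")
  case True thus ?thesis
  proof (induction A rule: finite_induct)
    case empty thus ?case using isn_0[OF assms] by simp
  next
    case (insert a F)
    thus ?case using isn_tri[OF assms, of "f a" "sum f F"] by simp
  qed
next
  case False thus ?thesis using isn_0[OF assms] by simp
qed

lemma isn_upper: assumes "is_norm (N :: real^'n \<Rightarrow> real)" shows "\<exists>C. \<forall>x. N x \<le> C * norm x"
proof (intro exI allI)
  fix x :: "real^'n"
  let ?C = "\<Sum>i\<in>UNIV. N (axis i 1)"
  have "N x = N (\<Sum>i\<in>UNIV. x$i *\<^sub>R axis i 1)"
    using basis_expansion[of x] by (simp add: scalar_mult_eq_scaleR)
  also have "\<dots> \<le> (\<Sum>i\<in>UNIV. N (x$i *\<^sub>R axis i 1))" by (rule isn_sum[OF assms])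
  also have "\<dots> = (\<Sum>i\<in>UNIV. \<bar>x$i\<bar> * N (axis i 1))" using isn_scale[OF assms] by simp
  also have "\<dots> \<le> (\<Sum>i\<in>UNIV. norm x * N (axis i 1))"
    by (rule sum_mono, rule mult_right_mono[OF component_le_norm_cart isn_nonneg[OF assms]])
  also have "\<dots> = ?C * norm x" by (simp add: sum_distrib_left mult.commute)
  finally show "N x \<le> ?C * norm x" .
qed

lemma isn_tendsto: assumes "is_norm (N :: real^'n \<Rightarrow> real)" and "(f \<longlongrightarrow> y) F"
  shows "((\<lambda>t. N (f t)) \<longlongrightarrow> N y) F"
proof -
  obtain C where C: "\<And>x. N x \<le> C * norm x" using isn_upper[OF assms(1)] by blast
  have "((\<lambda>t. N (f t) - N y) \<longlongrightarrow> 0) F"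
  proof (rule Lim_null_comparison)
    show "\<forall>\<^sub>F t in F. norm (N (f t) - N y) \<le> C * norm (f t - y)"
    proof (rule always_eventually, rule allI)
      fix t
      have "N (f t) \<le> N (f t - y) + N y" using isn_tri[OF assms(1), of "f t - y" y] by simp
      moreover have "N y \<le> N (y - f t) + N (f t)" using isn_tri[OF assms(1), of "y - f t" "f t"] by simp
      moreover have "N (y - f t) = N (f t - y)" by (rule isn_minus[OF assms(1)])
      ultimately have "\<bar>N (f t) - N y\<bar> \<le> N (f t - y)" by linarith
      thus "norm (N (f t) - N y) \<le> C * norm (f t - y)" using C[of "f t - y"] by simp
    qed
    have "((\<lambda>t. f t - y) \<longlongrightarrow> 0) F" using assms(2) by (rule LIM_zero)
    hence "((\<lambda>t. norm (f t - y)) \<longlongrightarrow> 0) F" by (rule tendsto_norm_zero)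
    thus "((\<lambda>t. C * norm (f t - y)) \<longlongrightarrow> 0) F" using tendsto_mult_left[of _ 0 F C] by simp
  qed
  thus ?thesis by (rule LIM_zero_cancel)
qed

lemma isn_cont: assumes "is_norm (N :: real^'n \<Rightarrow> real)" shows "continuous_on S N"
  unfolding continuous_on_def using isn_tendsto[OF assms tendsto_ident_at] by blast

lemma isn_lower: assumes "is_norm (N :: real^'n \<Rightarrow> real)" shows "\<exists>c>0. \<forall>x. c * norm x \<le> N x"
proof -
  obtain i :: 'n where True by blast
  have "axis i (1::real) \<in> sphere (0::real^'n) 1" by simp
  hence "sphere (0::real^'n) 1 \<noteq> {}" by blast
  then obtain x0 where x0: "x0 \<in> sphere 0 1" "\<And>y. y \<in> sphere 0 1 \<Longrightarrow> N x0 \<le> N y"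
    using continuous_attains_inf[OF compact_sphere _ isn_cont[OF assms]] by blast
  have "x0 \<noteq> 0" using x0(1) by auto
  hence "N x0 \<noteq> 0" using assms unfolding is_norm_def by blast
  hence pos: "N x0 > 0" using isn_nonneg[OF assms, of x0] by linarith
  show ?thesis
  proof (rule exI[of _ "N x0"], intro conjI allI)
    show "N x0 > 0" by (rule pos)
  next
    fix x :: "real^'n"
    show "N x0 * norm x \<le> N x"
    proof (cases "x = 0")
      case True thus ?thesis using isn_0[OF assms] by simp
    next
      case False
      have "(x /\<^sub>R norm x) \<in> sphere 0 1" using False by (simp add: sphere_def dist_norm)
      hence "N x0 \<le> N (x /\<^sub>R norm x)" by (rule x0(2))
      also have "\<dots> = N x / norm x" using isn_scale[OF assms, of "inverse (norm x)" x] by (simp add: divide_inverse mult.commute)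
      finally show ?thesis using False by (simp add: field_simps)
    qed
  qed
qed

lemma dual_ball_iff: assumes "is_norm (N :: real^'n \<Rightarrow> real)"
  shows "y \<in> dual_ball N \<longleftrightarrow> (\<forall>z. N z \<le> 1 \<longrightarrow> z \<bullet> y \<le> 1)"
proof -
  obtain c where c: "c > 0" "\<And>x. c * norm x \<le> N x" using isn_lower[OF assms] by blast
  let ?S = "{z \<bullet> y | z. N z \<le> 1}"
  have "(0::real^'n) \<bullet> y \<in> ?S" using isn_0[OF assms] by (intro CollectI exI[of _ "0::real^'n"]) simp
  hence ne: "?S \<noteq> {}" by blast
  have "bdd_above ?S"
  proof (rule bdd_aboveI)
    fix t assume "t \<in> ?S"
    then obtain z where z: "t = z \<bullet> y" "N z \<le> 1" by blast
    have "norm z \<le> 1 / c" using c z(2) by (smt (verit) divide_le_eq_1_pos mult.commute nonzero_mult_div_cancel_left pos_le_divide_eq)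
    have "t \<le> norm z * norm y" using z(1) by (simp add: norm_cauchy_schwarz)
    also have "\<dots> \<le> 1 / c * norm y" by (rule mult_right_mono[OF \<open>norm z \<le> 1 / c\<close> norm_ge_zero])
    finally show "t \<le> 1 / c * norm y" .
  qed
  thus ?thesis unfolding dual_ball_def dual_norm_def using cSup_le_iff[OF ne] by auto
qed


lemma Pmin_bounds:
  fixes N1 N2 :: "real^'n \<Rightarrow> real"
  assumes n1: "is_norm N1" and n2: "is_norm N2" and lm: "lam > 0" "mu > 0"
    and P: "is_P_min N1 N2 lam mu x v w"
  shows "norm (x - v - w) \<le> sqrt (2 * mu * (N1 x + lam / 2 * (norm x)\<^sup>2))"
    and "\<And>u'. x - u' \<in> dual_ball N2 \<Longrightarrow> N1 v \<le> N1 u' + lam / 2 * (norm u')\<^sup>2"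
    and "w \<in> dual_ball N2"
proof -
  show "w \<in> dual_ball N2" using P unfolding is_P_min_def by blast
  have z: "0 \<in> dual_ball N2" using dual_ball_iff[OF n2] by simp
  have "P_obj N1 lam mu x v w \<le> P_obj N1 lam mu x x 0" using P z unfolding is_P_min_def by blast
  hence A: "N1 v + lam / 2 * (norm v)\<^sup>2 + 1 / (2 * mu) * (norm (x - v - w))\<^sup>2 \<le> N1 x + lam / 2 * (norm x)\<^sup>2"
    unfolding P_obj_def by simp
  have "N1 v \<ge> 0" by (rule isn_nonneg[OF n1])
  moreover have "lam / 2 * (norm v)\<^sup>2 \<ge> 0" using lm by simp
  ultimately have "1 / (2 * mu) * (norm (x - v - w))\<^sup>2 \<le> N1 x + lam / 2 * (norm x)\<^sup>2" using A by linarith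
  hence "(norm (x - v - w))\<^sup>2 \<le> 2 * mu * (N1 x + lam / 2 * (norm x)\<^sup>2)" using lm by (simp add: field_simps)
  thus "norm (x - v - w) \<le> sqrt (2 * mu * (N1 x + lam / 2 * (norm x)\<^sup>2))"
    using real_le_rsqrt by blast
  fix u' assume "x - u' \<in> dual_ball N2"
  hence "P_obj N1 lam mu x v w \<le> P_obj N1 lam mu x u' (x - u')" using P unfolding is_P_min_def by blast
  hence B: "N1 v + lam / 2 * (norm v)\<^sup>2 + 1 / (2 * mu) * (norm (x - v - w))\<^sup>2 \<le> N1 u' + lam / 2 * (norm u')\<^sup>2"
    unfolding P_obj_def by simp
  have "lam / 2 * (norm v)\<^sup>2 \<ge> 0" using lm by simp
  moreover have "1 / (2 * mu) * (norm (x - v - w))\<^sup>2 \<ge> 0" using lm by simp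
  ultimately show "N1 v \<le> N1 u' + lam / 2 * (norm u')\<^sup>2" using B by linarith
qed

lemma dual_ball_closed:
  fixes N2 :: "real^'n \<Rightarrow> real"
  assumes n2: "is_norm N2" and "\<And>k. s k \<in> dual_ball N2" and "s \<longlonglongrightarrow> q"
  shows "q \<in> dual_ball N2"
proof -
  have "\<forall>z. N2 z \<le> 1 \<longrightarrow> z \<bullet> q \<le> 1"
  proof (intro allI impI)
    fix z assume z: "N2 z \<le> 1"
    have "(\<lambda>k. z \<bullet> s k) \<longlonglongrightarrow> z \<bullet> q" using assms(3) by (intro tendsto_intros)
    moreover have "\<And>k. z \<bullet> s k \<le> 1" using assms(2) z dual_ball_iff[OF n2] by blast
    ultimately show "z \<bullet> q \<le> 1" by (meson LIMSEQ_le_const2)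
  qed
  thus ?thesis using dual_ball_iff[OF n2] by blast
qed

theorem lemma5p2:
  fixes N1 N2 :: "real^'n \<Rightarrow> real" and x :: "real^'n"
    and v w :: "real \<Rightarrow> real \<Rightarrow> real^'n"
  assumes "is_norm N1" and "is_norm N2"
    and "\<And>lam mu. lam > 0 \<Longrightarrow> mu > 0 \<Longrightarrow> is_P_min N1 N2 lam mu x (v lam mu) (w lam mu)"
  shows "((\<lambda>(lam, mu). v lam mu + w lam mu) \<longlongrightarrow> x) (at (0, 0) within {0<..} \<times> {0<..})
     \<and> ((\<lambda>(lam, mu). (x - w lam mu) - v lam mu) \<longlongrightarrow> 0) (at (0, 0) within {0<..} \<times> {0<..})
     \<and> (\<forall>l m :: nat \<Rightarrow> real. (\<forall>k. l k > 0 \<and> m k > 0) \<longrightarrow> l \<longlonglongrightarrow> 0 \<longrightarrow> m \<longlonglongrightarrow> 0 \<longrightarrow>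
           {p. cluster_point (\<lambda>k. v (l k) (m k)) p} = {p. cluster_point (\<lambda>k. x - w (l k) (m k)) p}
         \<and> {p. cluster_point (\<lambda>k. v (l k) (m k)) p} \<subseteq> U_set N1 N2 x)"
proof -
  note n1 = assms(1) and n2 = assms(2) and P = assms(3)
  let ?F = "at ((0::real), (0::real)) within {0<..} \<times> {0<..}"
  define g :: "real \<times> real \<Rightarrow> real" where "g p = sqrt (2 * snd p * (N1 x + fst p / 2 * (norm x)\<^sup>2))" for p
  have g0: "(g \<longlongrightarrow> 0) ?F"
  proof -
    have "(g \<longlongrightarrow> sqrt (2 * snd (0::real,0::real) * (N1 x + fst (0::real,0::real) / 2 * (norm x)\<^sup>2))) ?F"
      unfolding g_def by (intro tendsto_intros) simp_all
    thus ?thesis by simp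
  qed
  have D: "((\<lambda>(lam, mu). (x - w lam mu) - v lam mu) \<longlongrightarrow> 0) ?F"
  proof (rule Lim_null_comparison[OF _ g0])
    have "\<forall>\<^sub>F p in ?F. p \<in> {0<..} \<times> {0<..}" by (rule eventually_at_topological[THEN iffD2]) auto
    thus "\<forall>\<^sub>F p in ?F. norm ((\<lambda>(lam, mu). (x - w lam mu) - v lam mu) p) \<le> g p"
    proof (rule eventually_mono)
      fix p :: "real \<times> real" assume "p \<in> {0<..} \<times> {0<..}"
      then obtain a b where p: "p = (a, b)" "a > 0" "b > 0" by auto
      show "norm ((\<lambda>(lam, mu). (x - w lam mu) - v lam mu) p) \<le> g p"
        using Pmin_bounds(1)[OF n1 n2 p(2,3) P[OF p(2,3)]] p(1) unfolding g_def
        by (simp add: algebra_simps)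
    qed
  qed
  have A: "((\<lambda>(lam, mu). v lam mu + w lam mu) \<longlongrightarrow> x) ?F"
  proof -
    have "((\<lambda>p. x - (\<lambda>(lam, mu). (x - w lam mu) - v lam mu) p) \<longlongrightarrow> x - 0) ?F"
      using D by (intro tendsto_intros)
    thus ?thesis by (simp add: case_prod_unfold algebra_simps)
  qed
  have C: "{p. cluster_point (\<lambda>k. v (l k) (m k)) p} = {p. cluster_point (\<lambda>k. x - w (l k) (m k)) p}
         \<and> {p. cluster_point (\<lambda>k. v (l k) (m k)) p} \<subseteq> U_set N1 N2 x"
    if lm: "\<forall>k. l k > 0 \<and> m k > 0" and l0: "l \<longlonglongrightarrow> 0" and m0: "m \<longlonglongrightarrow> 0" for l m :: "nat \<Rightarrow> real"
  proof -
    let ?d = "\<lambda>k. x - v (l k) (m k) - w (l k) (m k)"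
    have d0: "?d \<longlonglongrightarrow> 0"
    proof (rule Lim_null_comparison)
      show "\<forall>\<^sub>F k in sequentially. norm (?d k) \<le> sqrt (2 * m k * (N1 x + l k / 2 * (norm x)\<^sup>2))"
        using Pmin_bounds(1)[OF n1 n2 _ _ P] lm by (intro always_eventually) blast
      have "(\<lambda>k. sqrt (2 * m k * (N1 x + l k / 2 * (norm x)\<^sup>2))) \<longlonglongrightarrow> sqrt (2 * 0 * (N1 x + 0 / 2 * (norm x)\<^sup>2))"
        using l0 m0 by (intro tendsto_intros) simp_all
      thus "(\<lambda>k. sqrt (2 * m k * (N1 x + l k / 2 * (norm x)\<^sup>2))) \<longlonglongrightarrow> 0" by simp
    qed
    have sub: "(?d \<circ> r) \<longlonglongrightarrow> 0" if "strict_mono r" for r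
      using LIMSEQ_subseq_LIMSEQ[OF d0 that] .
    have eq: "cluster_point (\<lambda>k. v (l k) (m k)) p \<longleftrightarrow> cluster_point (\<lambda>k. x - w (l k) (m k)) p" for p
    proof
      assume "cluster_point (\<lambda>k. v (l k) (m k)) p"
      then obtain r where r: "strict_mono r" "((\<lambda>k. v (l k) (m k)) \<circ> r) \<longlonglongrightarrow> p" unfolding cluster_point_def by blast
      have "(\<lambda>k. ((\<lambda>k. v (l k) (m k)) \<circ> r) k + (?d \<circ> r) k) \<longlonglongrightarrow> p + 0"
        using r(2) sub[OF r(1)] by (intro tendsto_intros)
      hence "((\<lambda>k. x - w (l k) (m k)) \<circ> r) \<longlonglongrightarrow> p" by (simp add: o_def algebra_simps)
      thus "cluster_point (\<lambda>k. x - w (l k) (m k)) p" unfolding cluster_point_def using r(1) by blast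
    next
      assume "cluster_point (\<lambda>k. x - w (l k) (m k)) p"
      then obtain r where r: "strict_mono r" "((\<lambda>k. x - w (l k) (m k)) \<circ> r) \<longlonglongrightarrow> p" unfolding cluster_point_def by blast
      have "(\<lambda>k. ((\<lambda>k. x - w (l k) (m k)) \<circ> r) k - (?d \<circ> r) k) \<longlonglongrightarrow> p - 0"
        using r(2) sub[OF r(1)] by (intro tendsto_intros)
      hence "((\<lambda>k. v (l k) (m k)) \<circ> r) \<longlonglongrightarrow> p" by (simp add: o_def algebra_simps)
      thus "cluster_point (\<lambda>k. v (l k) (m k)) p" unfolding cluster_point_def using r(1) by blast
    qed
    have inU: "p \<in> U_set N1 N2 x" if cp: "cluster_point (\<lambda>k. v (l k) (m k)) p" for p
    proof -
      obtain r where r: "strict_mono r" "((\<lambda>k. v (l k) (m k)) \<circ> r) \<longlonglongrightarrow> p" using cp unfolding cluster_point_def by blast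
      have "(\<lambda>k. x - ((\<lambda>k. v (l k) (m k)) \<circ> r) k - (?d \<circ> r) k) \<longlonglongrightarrow> x - p - 0"
        using r(2) sub[OF r(1)] by (intro tendsto_intros)
      hence wl: "(\<lambda>k. w (l (r k)) (m (r k))) \<longlonglongrightarrow> x - p" by (simp add: o_def algebra_simps)
      have feas: "x - p \<in> dual_ball N2"
        using dual_ball_closed[OF n2 _ wl] Pmin_bounds(3)[OF n1 n2 _ _ P] lm by blast
      have "N1 p \<le> N1 u'" if u': "x - u' \<in> dual_ball N2" for u'
      proof -
        have "(\<lambda>k. N1 (((\<lambda>k. v (l k) (m k)) \<circ> r) k)) \<longlonglongrightarrow> N1 p" by (rule isn_tendsto[OF n1 r(2)])
        moreover have "(\<lambda>k. N1 u' + l (r k) / 2 * (norm u')\<^sup>2) \<longlonglongrightarrow> N1 u' + 0 / 2 * (norm u')\<^sup>2"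
          using LIMSEQ_subseq_LIMSEQ[OF l0 r(1)] by (intro tendsto_intros) (simp_all add: o_def)
        moreover have "\<forall>k. N1 (((\<lambda>k. v (l k) (m k)) \<circ> r) k) \<le> N1 u' + l (r k) / 2 * (norm u')\<^sup>2"
          using Pmin_bounds(2)[OF n1 n2 _ _ P u'] lm by simp
        ultimately have "N1 p \<le> N1 u' + 0 / 2 * (norm u')\<^sup>2" by (intro LIMSEQ_le) auto
        thus ?thesis by simp
      qed
      thus ?thesis unfolding U_set_def using feas by blast
    qed
    show ?thesis using eq inU by blast
  qed
  show ?thesis using A D C by blast
qed

end
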